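(* In the line model below, for all positive integers $k,N$ there is a deterministic protocol after which player $P_{k+1}$ knows $\mathbf{A}_k\mathbf{A}_{k-1}\cdots\mathbf{A}_1\mathbf{x}$ (over $\mathbb{F}_2$), using $O(N^2\log_2(2k)+k)$ rounds.
   Context: Line model: players $P_0,\dots,P_{k+1}$ with links $\{P_{i-1},P_i\}$ for $i\in[k+1]$; $P_0$ holds $\mathbf{x}\in\mathbb{F}_2^N$, $P_i$ holds $\mathbf{A}_i\in\mathbb{F}_2^{N\times N}$ for $i\in[k]$, $P_{k+1}$ has no input. Communication is synchronous in rounds, one bit per link per round; local computation is free. *)

theory Defs
  imports Complex_Main "HOL-Library.Z2"
begin

text \<open>Elements of F_2 are of type bit (a field). Vectors in F_2^N are functions
  nat => bit (only indices < N are relevant), N x N matrices are nat => nat => bit.\<close>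

definition matvec :: "nat \<Rightarrow> (nat \<Rightarrow> nat \<Rightarrow> bit) \<Rightarrow> (nat \<Rightarrow> bit) \<Rightarrow> (nat \<Rightarrow> bit)" where
  "matvec N M v = (\<lambda>i. \<Sum>j<N. M i j * v j)"

primrec iterprod :: "nat \<Rightarrow> (nat \<Rightarrow> nat \<Rightarrow> nat \<Rightarrow> bit) \<Rightarrow> nat \<Rightarrow> (nat \<Rightarrow> bit) \<Rightarrow> (nat \<Rightarrow> bit)" where
  "iterprod N A 0 x = x"
| "iterprod N A (Suc i) x = matvec N (A (Suc i)) (iterprod N A i x)"

datatype input = Vec "nat \<Rightarrow> bit" | Mat "nat \<Rightarrow> nat \<Rightarrow> bit" | NoInput

definition line_inputs :: "nat \<Rightarrow> (nat \<Rightarrow> bit) \<Rightarrow> (nat \<Rightarrow> nat \<Rightarrow> nat \<Rightarrow> bit) \<Rightarrow> nat \<Rightarrow> input" where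
  "line_inputs k x A i = (if i = 0 then Vec x else if i \<le> k then Mat (A i) else NoInput)"

text \<open>A deterministic synchronous protocol: in each round, player i, given its identity,
  its private input and the history of bits received so far (one pair per past round:
  bit received from the left neighbour, bit received from the right neighbour),
  chooses a pair (bit sent to left neighbour, bit sent to right neighbour).
  Each link carries one bit in each direction per round.\<close>
type_synonym protocol = "nat \<Rightarrow> input \<Rightarrow> (bool \<times> bool) list \<Rightarrow> bool \<times> bool"

primrec hist :: "protocol \<Rightarrow> (nat \<Rightarrow> input) \<Rightarrow> nat \<Rightarrow> nat \<Rightarrow> nat \<Rightarrow> (bool \<times> bool) list" where
  "hist P inp k 0 i = []"
| "hist P inp k (Suc r) i =
     hist P inp k r i @
     [( if i = 0 then False else snd (P (i - 1) (inp (i - 1)) (hist P inp k r (i - 1))),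
        if i \<ge> k + 1 then False else fst (P (i + 1) (inp (i + 1)) (hist P inp k r (i + 1))) )]"

end

theory Submission
  imports Defs "HOL-Library.Discrete_Functions"
begin

context fixes N :: nat begin

definition trunc :: "(nat \<Rightarrow> nat \<Rightarrow> bit) \<Rightarrow> nat \<Rightarrow> nat \<Rightarrow> bit" where
  "trunc M = (\<lambda>a b. if a < N \<and> b < N then M a b else 0)"

definition mmt :: "(nat \<Rightarrow> nat \<Rightarrow> bit) \<Rightarrow> (nat \<Rightarrow> nat \<Rightarrow> bit) \<Rightarrow> nat \<Rightarrow> nat \<Rightarrow> bit" where
  "mmt A B = (\<lambda>a b. if a < N \<and> b < N then (\<Sum>c<N. A a c * B c b) else 0)"

definition encode :: "(nat \<Rightarrow> nat \<Rightarrow> bit) \<Rightarrow> nat \<Rightarrow> bool" where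
  "encode M m = (M (m div N) (m mod N) = 1)"

definition decode :: "(nat \<Rightarrow> bool) \<Rightarrow> nat \<Rightarrow> nat \<Rightarrow> bit" where
  "decode f = (\<lambda>a b. if a < N \<and> b < N then (if f (a * N + b) then 1 else 0) else 0)"

definition base :: "input \<Rightarrow> nat \<Rightarrow> nat \<Rightarrow> bit" where
  "base inp = (case inp of Vec v \<Rightarrow> trunc (\<lambda>a b. v a) | Mat m \<Rightarrow> trunc m
     | NoInput \<Rightarrow> trunc (\<lambda>a b. if a = b then 1 else 0))"

definition Ts :: "nat \<Rightarrow> nat" where
  "Ts t = t * N^2 + (2^t - 1)"

definition phase :: "nat \<Rightarrow> nat" where
  "phase r = (LEAST t. r < Ts (Suc t))"

lemma mmt_assoc: "mmt (mmt A B) C = mmt A (mmt B C)"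
proof (intro ext)
  fix a b
  show "mmt (mmt A B) C a b = mmt A (mmt B C) a b"
  proof (cases "a < N \<and> b < N")
    case True
    have "mmt (mmt A B) C a b = (\<Sum>d<N. (\<Sum>c<N. A a c * B c d) * C d b)"
      using True by (simp add: mmt_def)
    also have "\<dots> = (\<Sum>d<N. \<Sum>c<N. A a c * B c d * C d b)"
      by (simp only: sum_distrib_right)
    also have "\<dots> = (\<Sum>c<N. \<Sum>d<N. A a c * B c d * C d b)"
      by (rule sum.swap)
    also have "\<dots> = (\<Sum>c<N. A a c * (\<Sum>d<N. B c d * C d b))"
      by (simp only: sum_distrib_left mult.assoc)
    also have "\<dots> = mmt A (mmt B C) a b"
      using True by (simp add: mmt_def)
    finally show ?thesis .
  qed (auto simp: mmt_def)
qed

lemma Ts_Suc: "Ts (Suc t) = Ts t + N^2 + 2^t"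
proof -
  have "(1::nat) \<le> 2^t" by simp
  then show ?thesis unfolding Ts_def by (simp add: algebra_simps)
qed

lemma Ts_mono: "t \<le> t' \<Longrightarrow> Ts t \<le> Ts t'"
proof (induction t' )
  case 0 then show ?case by simp
next
  case (Suc t') then show ?case by (cases "t = Suc t'") (auto simp: Ts_Suc)
qed

lemma phase_eq: assumes "Ts t \<le> r" "r < Ts (Suc t)" shows "phase r = t"
  unfolding phase_def
proof (rule Least_equality)
  show "r < Ts (Suc t)" by fact
  fix t' assume "r < Ts (Suc t')"
  show "t \<le> t'"
  proof (rule ccontr)
    assume "\<not> t \<le> t'"
    then have "Suc t' \<le> t" by simp
    then have "Ts (Suc t') \<le> Ts t" by (rule Ts_mono)
    with assms \<open>r < Ts (Suc t')\<close> show False by simp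
  qed
qed

lemma idx_lt: "a < N \<Longrightarrow> b < N \<Longrightarrow> a * N + b < N^2"
proof -
  assume "a < N" "b < N"
  then have "a * N + b < a * N + N" by simp
  also have "\<dots> = (a+1) * N" by simp
  also have "\<dots> \<le> N * N" using \<open>a < N\<close> by (intro mult_right_mono) auto
  finally show ?thesis by (simp add: power2_eq_square)
qed

lemma decode_encode: "decode (encode M) = trunc M"
proof (intro ext)
  fix a b
  show "decode (encode M) a b = trunc M a b"
  proof (cases "a < N \<and> b < N")
    case True
    then have "(a * N + b) div N = a" "(a * N + b) mod N = b" by auto
    with True show ?thesis
      by (auto simp: decode_def encode_def trunc_def)
  qed (auto simp: decode_def trunc_def)
qed

lemma decode_cong: "(\<And>m. m < N^2 \<Longrightarrow> f m = g m) \<Longrightarrow> decode f = decode g"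
  unfolding decode_def using idx_lt by (intro ext) auto

lemma trunc_mmt[simp]: "trunc (mmt A B) = mmt A B"
  by (intro ext) (simp add: trunc_def mmt_def)

lemma trunc_trunc[simp]: "trunc (trunc A) = trunc A"
  by (intro ext) (simp add: trunc_def)

lemma trunc_base[simp]: "trunc (base inp) = base inp"
  by (cases inp) (simp_all add: base_def)

lemma hist_length[simp]: "length (hist P inp k r i) = r"
  by (induction r) auto

lemma hist_nth: "e < r \<Longrightarrow> hist P inp k r i ! e = hist P inp k (Suc e) i ! e"
proof (induction r)
  case 0 then show ?case by simp
next
  case (Suc r)
  show ?case
  proof (cases "e < r")
    case True
    then show ?thesis using Suc by (simp add: nth_append)
  next
    case False
    with Suc have "e = r" by simp
    then show ?thesis by simp
  qed
qed

context fixes k :: nat begin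

primrec know :: "nat \<Rightarrow> input \<Rightarrow> (nat \<Rightarrow> bool) \<Rightarrow> nat \<Rightarrow> nat \<Rightarrow> nat \<Rightarrow> bit" where
  "know i inp g 0 = base inp"
| "know i inp g (Suc t) = (if 2^(Suc t) dvd (k+1-i) \<and> 2^t \<le> i
      then mmt (know i inp g t) (decode (\<lambda>m. g (Ts t + m + 2^t - 1)))
      else know i inp g t)"

definition proto :: protocol where
  "proto i inp h = (False, (let r = length h; t = phase r; m = r - Ts t in
     if 2^t dvd (k+1-i) then (m < N^2 \<and> encode (know i inp (\<lambda>e. fst (h!e)) t) m)
     else fst (h ! (r-1))))"

lemma know_cong: "(\<And>e. e < Ts t \<Longrightarrow> g e = g' e) \<Longrightarrow> know i inp g t = know i inp g' t"
proof (induction t)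
  case 0 then show ?case by simp
next
  case (Suc t)
  have h1: "\<And>e. e < Ts t \<Longrightarrow> g e = g' e" using Suc.prems Ts_mono[of t "Suc t"] by force
  have h2: "decode (\<lambda>m. g (Ts t + m + 2^t - 1)) = decode (\<lambda>m. g' (Ts t + m + 2^t - 1))"
  proof (rule decode_cong)
    fix m :: nat assume "m < N^2"
    then have "Ts t + m + 2^t - 1 < Ts (Suc t)" by (simp add: Ts_Suc)
    then show "g (Ts t + m + 2^t - 1) = g' (Ts t + m + 2^t - 1)" using Suc.prems by blast
  qed
  show ?case using Suc.IH[OF h1] h2 by simp
qed

end
context fixes k :: nat and inp :: "nat \<Rightarrow> input" begin

abbreviation "H r i \<equiv> hist (proto k) inp k r i"

definition G :: "nat \<Rightarrow> nat \<Rightarrow> bool" where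
  "G i e = fst (H (Suc e) i ! e)"

lemma H_fst: "e < r \<Longrightarrow> fst (H r i ! e) = G i e"
  unfolding G_def using hist_nth by metis

lemma G_pos: "1 \<le> i \<Longrightarrow> G i e = snd (proto k (i-1) (inp (i-1)) (H e (i-1)))"
  unfolding G_def by (simp add: nth_append)

lemma know_H: "Ts t \<le> r \<Longrightarrow> know k i inp' (\<lambda>e. fst (H r i ! e)) t = know k i inp' (G i) t"
  by (rule know_cong) (simp add: H_fst)

lemma send_holder:
  assumes "2^t dvd (k+1-i)" "m < N^2" "know k i (inp i) (G i) t = V"
  shows "snd (proto k i (inp i) (H (Ts t + m) i)) = encode V m"
proof -
  have ph: "phase (Ts t + m) = t" by (rule phase_eq) (use assms in \<open>auto simp: Ts_Suc\<close>)
  show ?thesis using assms ph know_H[of t "Ts t + m" i "inp i"]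
    by (simp add: proto_def Let_def)
qed

lemma send_relay:
  assumes "\<not> 2^t dvd (k+1-i)" "Ts t \<le> r" "r < Ts (Suc t)" "1 \<le> r"
  shows "snd (proto k i (inp i) (H r i)) = G i (r-1)"
proof -
  have ph: "phase r = t" by (rule phase_eq) (use assms in auto)
  show ?thesis using assms ph H_fst[of "r-1" r i]
    by (simp add: proto_def Let_def)
qed

lemma not_dvd_mid:
  assumes "(2::nat)^t dvd (k+1-h)" "0 < d" "d < 2^t" "h + d \<le> k+1"
  shows "\<not> 2^t dvd (k+1-(h+d))"
proof
  assume a: "2^t dvd (k+1-(h+d))"
  have "2^t dvd ((k+1-h) - (k+1-(h+d)))" using assms(1) a by (rule dvd_diff_nat)
  moreover have "(k+1-h) - (k+1-(h+d)) = d" using assms(4) by simp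
  ultimately have "2^t dvd d" by simp
  then have "2^t \<le> d" using assms(2) by (rule dvd_imp_le)
  with assms(3) show False by simp
qed

lemma relay:
  assumes "2^t dvd (k+1-h)" "know k h (inp h) (G h) t = V" "m < N^2"
  shows "1 \<le> d \<Longrightarrow> d \<le> 2^t \<Longrightarrow> h + d \<le> k+1 \<Longrightarrow> G (h+d) (Ts t + m + d - 1) = encode V m"
proof (induction d)
  case 0 then show ?case by simp
next
  case (Suc d)
  show ?case
  proof (cases "d = 0")
    case True
    then show ?thesis using G_pos[of "h+1" "Ts t + m"] send_holder[OF assms(1,3,2)] by simp
  next
    case False
    have nd: "\<not> 2^t dvd (k+1-(h+d))"
      by (rule not_dvd_mid[OF assms(1)]) (use False Suc.prems in auto)
    have "G (h + Suc d) (Ts t + m + Suc d - 1) = snd (proto k (h+d) (inp (h+d)) (H (Ts t + m + d) (h+d)))"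
      using G_pos[of "h + Suc d" "Ts t + m + d"] by simp
    also have "\<dots> = G (h+d) (Ts t + m + d - 1)"
      by (rule send_relay[OF nd]) (use Suc.prems False assms(3) in \<open>auto simp: Ts_Suc\<close>)
    also have "\<dots> = encode V m" using Suc.IH Suc.prems False by simp
    finally show ?thesis .
  qed
qed

primrec prodr :: "nat \<Rightarrow> nat \<Rightarrow> nat \<Rightarrow> nat \<Rightarrow> bit" where
  "prodr j 0 = base (inp j)"
| "prodr j (Suc n) = mmt (base (inp (j + Suc n))) (prodr j n)"

lemma trunc_prodr[simp]: "trunc (prodr j n) = prodr j n"
  by (cases n) simp_all

lemma prodr_split: "prodr j (a + b + 1) = mmt (prodr (j+b+1) a) (prodr j b)"
proof (induction a)
  case 0 then show ?case by simp
next
  case (Suc a)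
  have "prodr j (Suc a + b + 1) = mmt (base (inp (j + Suc a + b + 1))) (prodr j (a + b + 1))"
    by (simp add: algebra_simps)
  also have "\<dots> = mmt (base (inp (j + Suc a + b + 1))) (mmt (prodr (j+b+1) a) (prodr j b))"
    using Suc by simp
  also have "\<dots> = mmt (prodr (j+b+1) (Suc a)) (prodr j b)"
    by (simp add: mmt_assoc algebra_simps)
  finally show ?case .
qed

definition Q :: "nat \<Rightarrow> nat \<Rightarrow> nat \<Rightarrow> nat \<Rightarrow> bit" where
  "Q t i = prodr (i + 1 - 2^t) (i - (i + 1 - 2^t))"

lemma Q_split: assumes "2^t \<le> i" shows "Q (Suc t) i = mmt (Q t i) (Q t (i - 2^t))"
proof -
  define p :: nat where "p = 2^t"
  have p1: "1 \<le> p" by (simp add: p_def)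
  have ip: "p \<le> i" using assms by (simp add: p_def)
  have Qt: "Q t i = prodr (i+1-p) (p-1)" using ip p1 by (simp add: Q_def p_def)
  show ?thesis
  proof (cases "2*p \<le> i+1")
    case True
    define lo where "lo = i + 1 - 2*p"
    have e1: "Q (Suc t) i = prodr lo (i - lo)"
      unfolding Q_def by (simp add: p_def lo_def)
    have e2: "i - lo = (p-1)+(p-1)+1" using True p1 by (simp add: lo_def)
    have e3: "i - p + 1 - 2^t = lo" "i - p - lo = p - 1" using True p1 ip by (simp_all add: lo_def p_def)
    have "Q (Suc t) i = prodr lo ((p-1)+(p-1)+1)" using e1 e2 by simp
    also have "\<dots> = mmt (prodr (lo + (p-1) + 1) (p-1)) (prodr lo (p-1))" by (rule prodr_split)
    also have "lo + (p-1) + 1 = i+1-p" using True p1 by (simp add: lo_def)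
    also have "prodr lo (p-1) = Q t (i - p)"
      unfolding Q_def using e3 by simp
    finally show ?thesis using Qt by (simp add: p_def)
  next
    case False
    have e1: "Q (Suc t) i = prodr 0 i"
      unfolding Q_def using False by (simp add: p_def)
    have e2: "i = (p-1)+(i-p)+1" using ip p1 by simp
    have "Q (Suc t) i = prodr 0 ((p-1)+(i-p)+1)" using e1 e2 by simp
    also have "\<dots> = mmt (prodr (0 + (i-p) + 1) (p-1)) (prodr 0 (i-p))" by (rule prodr_split)
    also have "0 + (i-p) + 1 = i+1-p" using ip by simp
    also have "prodr 0 (i-p) = Q t (i - p)"
      unfolding Q_def using False ip by (simp add: p_def)
    finally show ?thesis using Qt by (simp add: p_def)
  qed
qed

lemma Q_small: assumes "i < 2^t" shows "Q (Suc t) i = Q t i"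
proof -
  have "(2::nat)^t \<le> 2^Suc t" by simp
  then show ?thesis using assms unfolding Q_def by simp
qed

lemma invariant: "i \<le> k+1 \<Longrightarrow> 2^t dvd (k+1-i) \<Longrightarrow> know k i (inp i) (G i) t = Q t i"
proof (induction t arbitrary: i)
  case 0 then show ?case by (simp add: Q_def)
next
  case (Suc t)
  have dt: "2^t dvd (k+1-i)" using Suc.prems(2) by (rule dvd_trans[rotated]) simp
  have IHi: "know k i (inp i) (G i) t = Q t i" using Suc.IH Suc.prems(1) dt by blast
  show ?case
  proof (cases "2^t \<le> i")
    case True
    define h where "h = i - 2^t"
    have hi: "h + 2^t = i" using True by (simp add: h_def)
    have dh: "2^t dvd (k+1-h)"
    proof -
      have "k+1-h = (k+1-i) + 2^t" using hi Suc.prems(1) by simp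
      then show ?thesis using dt by simp
    qed
    have IHh: "know k h (inp h) (G h) t = Q t h" using Suc.IH dh Suc.prems(1) hi by simp
    have dec: "decode (\<lambda>m. G i (Ts t + m + 2^t - 1)) = Q t h"
    proof -
      have "decode (\<lambda>m. G i (Ts t + m + 2^t - 1)) = decode (encode (Q t h))"
      proof (rule decode_cong)
        fix m :: nat assume "m < N^2"
        show "G i (Ts t + m + 2^t - 1) = encode (Q t h) m"
          using relay[OF dh IHh \<open>m < N^2\<close>, of "2^t"] hi Suc.prems(1) by simp
      qed
      also have "\<dots> = Q t h" by (simp add: decode_encode Q_def)
      finally show ?thesis .
    qed
    have "know k i (inp i) (G i) (Suc t) = mmt (Q t i) (Q t h)"
      using Suc.prems(2) True IHi dec by simp
    then show ?thesis using Q_split[OF True] by (simp add: h_def)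
  next
    case False
    then show ?thesis using IHi Q_small by simp
  qed
qed

end
end

lemma prodr_col:
  assumes "1 \<le> N"
  shows "n \<le> k \<Longrightarrow> prodr N (line_inputs k x A) 0 n a 0 = (if a < N then iterprod N A n x a else 0)"
proof (induction n arbitrary: a)
  case 0 then show ?case using assms by (simp add: base_def line_inputs_def trunc_def)
next
  case (Suc n)
  have b: "base N (line_inputs k x A (Suc n)) = trunc N (A (Suc n))"
    using Suc.prems by (simp add: base_def line_inputs_def)
  show ?case
  proof (cases "a < N")
    case True
    have "prodr N (line_inputs k x A) 0 (Suc n) a 0
        = (\<Sum>c<N. trunc N (A (Suc n)) a c * prodr N (line_inputs k x A) 0 n c 0)"
      using True assms b by (simp add: mmt_def)
    also have "\<dots> = (\<Sum>c<N. A (Suc n) a c * iterprod N A n x c)"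
      by (rule sum.cong) (use True Suc in \<open>auto simp: trunc_def\<close>)
    finally show ?thesis using True by (simp add: matvec_def)
  qed (simp add: mmt_def b)
qed

lemma mmt_id: assumes "j < N"
  shows "mmt N (base N NoInput) B j b = (if b < N then B j b else 0)"
proof (cases "b < N")
  case True
  have "(\<Sum>c<N. trunc N (\<lambda>a b. if a = b then 1 else 0) j c * B c b) = (\<Sum>c<N. if c = j then B c b else 0)"
    by (rule sum.cong) (auto simp: trunc_def assms)
  also have "\<dots> = B j b" using assms by simp
  finally show ?thesis using True assms by (simp add: mmt_def base_def)
qed (simp add: mmt_def)

theorem mainTheorem5:
  shows "\<exists>C::real. C > 0 \<and>
    (\<forall>k N::nat. k \<ge> 1 \<longrightarrow> N \<ge> 1 \<longrightarrow>
      (\<exists>(P::protocol) (out :: (bool \<times> bool) list \<Rightarrow> nat \<Rightarrow> bit) (R::nat).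
         real R \<le> C * (real N ^ 2 * log 2 (2 * real k) + real k) \<and>
         (\<forall>x A. \<forall>j<N. out (hist P (line_inputs k x A) k R (k + 1)) j = iterprod N A k x j)))"
proof (intro exI[of _ 4] conjI allI impI)
  fix k N :: nat
  assume k1: "1 \<le> k" and N1: "1 \<le> N"
  define L where "L = Suc (floor_log (k+1))"
  have L1: "k + 1 < 2^L" using floor_log_exp2_gt[of "k+1"] by (simp add: L_def)
  have L2: "2^floor_log (k+1) \<le> k+1" by (rule floor_log_exp2_le) simp
  define R where "R = Ts N L"
  define out :: "(bool \<times> bool) list \<Rightarrow> nat \<Rightarrow> bit" where "out = (\<lambda>h j. know N k (k+1) NoInput (\<lambda>e. fst (h!e)) L j 0)"
  show "\<exists>(P::protocol) (out :: (bool \<times> bool) list \<Rightarrow> nat \<Rightarrow> bit) (R::nat).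
         real R \<le> 4 * (real N ^ 2 * log 2 (2 * real k) + real k) \<and>
         (\<forall>x A. \<forall>j<N. out (hist P (line_inputs k x A) k R (k + 1)) j = iterprod N A k x j)"
  proof (intro exI conjI allI impI)
    fix x A j assume j: "j < N"
    define inp where "inp = line_inputs k x A"
    have inpk: "inp (k+1) = NoInput" by (simp add: inp_def line_inputs_def)
    have "out (hist (proto N k) inp k R (k + 1)) j = know N k (k+1) (inp (k+1)) (G N k inp (k+1)) L j 0"
      unfolding out_def R_def using know_H[where N=N and t=L and r="Ts N L" and k=k and inp=inp and i="k+1" and inp'=NoInput] inpk by simp
    also have "\<dots> = Q N inp L (k+1) j 0" using invariant[where N=N and k=k and inp=inp and i="k+1" and t=L] by simp
    also have "Q N inp L (k+1) = prodr N inp 0 (k+1)" using L1 by (simp add: Q_def)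
    also have "prodr N inp 0 (k+1) j 0 = prodr N inp 0 k j 0"
      using mmt_id[OF j] N1 inpk by simp
    also have "\<dots> = iterprod N A k x j" using prodr_col[where N=N and k=k and n=k and x=x and A=A and a=j, OF N1] j by (simp add: inp_def)
    finally show "out (hist (proto N k) (line_inputs k x A) k R (k + 1)) j = iterprod N A k x j"
      by (simp add: inp_def)
  next
    define f where "f = floor_log (k+1)"
    have lg1: "1 \<le> log 2 (2 * real k)" using k1 by simp
    have pf0: "2^f \<le> 2 * k" using L2 k1 unfolding f_def by linarith
    have pf: "(2::real)^f \<le> 2 * real k"
    proof -
      have "real (2^f) \<le> real (2 * k)" using pf0 by (simp only: of_nat_le_iff)
      then show ?thesis by simp
    qed
    have "real f = log 2 ((2::real)^f)" by simp
    also have "\<dots> \<le> log 2 (2 * real k)" using pf k1 by (subst log_le_cancel_iff) auto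
    finally have fl: "real f \<le> log 2 (2 * real k)" .
    have RL0: "R \<le> L * N^2 + 2^L" unfolding R_def Ts_def by simp
    have RL: "real R \<le> real L * real N^2 + 2^L"
    proof -
      have "real R \<le> real (L * N^2 + 2^L)" using RL0 by (simp only: of_nat_le_iff)
      then show ?thesis by simp
    qed
    have "real L = real f + 1" by (simp add: L_def f_def)
    also have "\<dots> \<le> 2 * log 2 (2 * real k)" using fl lg1 by simp
    finally have Lb: "real L \<le> 2 * log 2 (2 * real k)" .
    have "(2::real)^L = 2 * 2^f" by (simp add: L_def f_def)
    also have "\<dots> \<le> 4 * real k" using pf by simp
    finally have Pb: "(2::real)^L \<le> 4 * real k" .
    have "real L * real N^2 \<le> 2 * log 2 (2 * real k) * real N^2"
      using Lb by (intro mult_right_mono) auto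
    show "real R \<le> 4 * (real N ^ 2 * log 2 (2 * real k) + real k)"
    proof -
      have "0 \<le> real N ^ 2 * log 2 (2 * real k)" using lg1 by simp
      then show ?thesis using RL Pb \<open>real L * real N^2 \<le> 2 * log 2 (2 * real k) * real N^2\<close>
        by (simp add: algebra_simps)
    qed
  qed
qed simp

end
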